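(* Let $\Sigma$ be an alphabet with $|\Sigma|\geq 4$, let $\#\notin\Sigma$, let $S$ be a string of length $n$ over $\Sigma$, and let $P$ be a substring of $S$. Suppose that there is a string $S'$ obtained from $S$ by replacing the letters at $k$ positions with $\#$ such that $|\mathsf{occ}_S(P)|-|\mathsf{occ}_{S'}(P)|\geq y$ for some positive integer $y$. Then there is a string $S''\in\Sigma^n$ obtained from $S$ by $k$ substitutions with letters from $\Sigma$ (so $d_H(S,S'')\leq k$) such that $|\mathsf{occ}_S(P)|-|\mathsf{occ}_{S''}(P)|\geq y$.
   Context: $\mathsf{occ}_T(P)$ is the set of starting positions of occurrences of $P$ in $T$; $d_H$ is the Hamming distance between strings of equal length. *)

theory Defs
  imports Main
begin

definition occ :: "'a list \<Rightarrow> 'a list \<Rightarrow> nat set" where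
  "occ T P = {i. i + length P \<le> length T \<and> take (length P) (drop i T) = P}"

definition hamming :: "'a list \<Rightarrow> 'a list \<Rightarrow> nat" where
  "hamming xs ys = card {i. i < length xs \<and> xs ! i \<noteq> ys ! i}"

definition mask :: "'a list \<Rightarrow> nat set \<Rightarrow> 'a \<Rightarrow> 'a list" where
  "mask S K h = map (\<lambda>i. if i \<in> K then h else S ! i) [0..<length S]"

end

theory Submission
  imports Defs
begin

lemma occ_iff:
  "i \<in> occ T P \<longleftrightarrow> i + length P \<le> length T \<and> (\<forall>p<length P. T!(i+p) = P!p)"
  unfolding occ_def by (auto simp: list_eq_iff_nth_eq)

definition win :: "'a list \<Rightarrow> 'a list \<Rightarrow> nat \<Rightarrow> nat \<Rightarrow> bool" where
  "win T P j i \<longleftrightarrow> i \<le> j \<and> j < i + length P \<and> i + length P \<le> length T \<and>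
     (\<forall>p. i \<le> p \<and> p < i + length P \<and> p \<noteq> j \<longrightarrow> T!p = P!(p-i))"

lemma triple:
  assumes w1: "win T P j i1" and w2: "win T P j i2" and w3: "win T P j i3"
    and o: "i1 < i2" "i2 < i3"
  shows "P!(j-i1) = P!(j-i3)"
proof -
  define p1 where "p1 = j + i2 - i1"
  define p2 where "p2 = j + i2 - i3"
  have W: "\<And>i p. win T P j i \<Longrightarrow> i \<le> p \<Longrightarrow> p < i + length P \<Longrightarrow> p \<noteq> j \<Longrightarrow> T!p = P!(p-i)"
    unfolding win_def by blast
  have b: "i1 \<le> j" "j < i1 + length P" "i3 \<le> j" using w1 w3 unfolding win_def by auto
  have "T!p1 = P!(p1-i2)" using o b by (intro W[OF w2]) (auto simp: p1_def)
  moreover have "p1 - i2 = j - i1" using o b unfolding p1_def by auto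
  moreover have "T!p1 = P!(p1-i3)" using o b by (intro W[OF w3]) (auto simp: p1_def)
  moreover have "p1 - i3 = p2 - i1" using o b unfolding p1_def p2_def by auto
  moreover have "T!p2 = P!(p2-i1)" using o b by (intro W[OF w1]) (auto simp: p2_def)
  moreover have "T!p2 = P!(p2-i2)" using o b by (intro W[OF w2]) (auto simp: p2_def)
  moreover have "p2 - i2 = j - i3" using o b unfolding p2_def by auto
  ultimately show ?thesis by metis
qed

lemma no_three:
  assumes "win T P j x" "win T P j y" "win T P j z"
    and "P!(j-x) \<noteq> P!(j-y)" "P!(j-y) \<noteq> P!(j-z)" "P!(j-x) \<noteq> P!(j-z)"
  shows False
proof -
  have d: "x \<noteq> y" "y \<noteq> z" "x \<noteq> z" using assms by auto
  have T: "\<And>a b c. win T P j a \<Longrightarrow> win T P j b \<Longrightarrow> win T P j c \<Longrightarrow> a < b \<Longrightarrow> b < c \<Longrightarrow> P!(j-a) = P!(j-c)"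
    using triple by blast
  have "x<y \<or> y<x" "y<z \<or> z<y" "x<z \<or> z<x" using d by auto
  then show False
    by (elim disjE) (metis T assms less_trans)+
qed

lemma step:
  assumes "j < length T" "T!j = hash" "hash \<notin> set P"
    and "\<not> (\<exists>i. win T P j i \<and> c = P!(j-i))"
  shows "occ (T[j:=c]) P \<subseteq> occ T P"
proof
  fix i assume i: "i \<in> occ (T[j:=c]) P"
  hence A: "i + length P \<le> length T" "\<forall>p<length P. T[j:=c]!(i+p) = P!p"
    by (auto simp: occ_iff)
  show "i \<in> occ T P"
  proof (cases "i \<le> j \<and> j < i + length P")
    case True
    have "win T P j i" unfolding win_def
    proof (intro conjI allI impI)
      fix p assume p: "i \<le> p \<and> p < i + length P \<and> p \<noteq> j"
      have "p - i < length P" using p by linarith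
      then have "T[j:=c]!p = P!(p-i)" using A(2)[rule_format, of "p-i"] p by simp
      then show "T!p = P!(p-i)" using p by simp
    qed (use True A in linarith)+
    moreover have "c = P!(j-i)"
    proof -
      have "j - i < length P" using True by linarith
      then have "T[j:=c]!(i+(j-i)) = P!(j-i)" using A(2) by blast
      moreover have "i+(j-i) = j" using True by linarith
      ultimately show ?thesis using assms(1) by simp
    qed
    ultimately show ?thesis using assms(4) by blast
  next
    case False
    have "\<forall>p<length P. T!(i+p) = P!p"
    proof (intro allI impI)
      fix p assume pl: "p < length P"
      then have "i + p \<noteq> j" using False by linarith
      then have "T!(i+p) = T[j:=c]!(i+p)" by simp
      also have "\<dots> = P!p" using A(2) pl by blast
      finally show "T!(i+p) = P!p" .
    qed
    then show ?thesis using A by (simp add: occ_iff)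
  qed
qed

lemma choose_letter:
  assumes "finite \<Sigma>" "card \<Sigma> \<ge> 3"
  shows "\<exists>c\<in>\<Sigma>. \<not> (\<exists>i. win T P j i \<and> c = P!(j-i))"
proof (rule ccontr)
  assume H: "\<not> ?thesis"
  obtain A where A: "A \<subseteq> \<Sigma>" "card A = 3"
    using obtain_subset_with_card_n[OF assms(2)] by metis
  then obtain a b c where abc: "A = {a,b,c}" "a \<noteq> b" "b \<noteq> c" "a \<noteq> c"
    by (auto simp: card_3_iff)
  have "a \<in> \<Sigma>" "b \<in> \<Sigma>" "c \<in> \<Sigma>" using A abc by auto
  then obtain x y z where "win T P j x" "a = P!(j-x)" "win T P j y" "b = P!(j-y)"
     "win T P j z" "c = P!(j-z)" using H by blast
  then show False using no_three abc by metis
qed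

lemma fill:
  assumes "hash \<notin> \<Sigma>" "set P \<subseteq> \<Sigma>" "finite \<Sigma>" "card \<Sigma> \<ge> 3"
  shows "\<forall>T. card {i. i < length T \<and> T!i = hash} = N \<longrightarrow> set T \<subseteq> insert hash \<Sigma> \<longrightarrow>
    (\<exists>T''. length T'' = length T \<and> set T'' \<subseteq> \<Sigma> \<and>
        (\<forall>i<length T. T!i \<noteq> hash \<longrightarrow> T''!i = T!i) \<and> occ T'' P \<subseteq> occ T P)"
proof (induction N)
  case 0
  show ?case
  proof (intro allI impI)
    fix T :: "'a list"
    assume c: "card {i. i < length T \<and> T!i = hash} = 0" and s: "set T \<subseteq> insert hash \<Sigma>"
    have "{i. i < length T \<and> T!i = hash} = {}" using c by simp
    then have "hash \<notin> set T" by (auto simp: in_set_conv_nth)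
    then have "set T \<subseteq> \<Sigma>" using s by auto
    then show "\<exists>T''. length T'' = length T \<and> set T'' \<subseteq> \<Sigma> \<and>
        (\<forall>i<length T. T!i \<noteq> hash \<longrightarrow> T''!i = T!i) \<and> occ T'' P \<subseteq> occ T P"
      by blast
  qed
next
  case (Suc N)
  show ?case
  proof (intro allI impI)
    fix T :: "'a list"
    assume c: "card {i. i < length T \<and> T!i = hash} = Suc N" and s: "set T \<subseteq> insert hash \<Sigma>"
    define H where "H = {i. i < length T \<and> T!i = hash}"
    have "H \<noteq> {}" using c unfolding H_def by (metis card.empty nat.distinct(1))
    then obtain j where j: "j < length T" "T!j = hash" unfolding H_def by auto
    obtain c where cS: "c \<in> \<Sigma>" and cF: "\<not> (\<exists>i. win T P j i \<and> c = P!(j-i))"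
      using choose_letter[OF assms(3,4)] by blast
    define T1 where "T1 = T[j:=c]"
    have hP: "hash \<notin> set P" using assms(1,2) by auto
    have occ1: "occ T1 P \<subseteq> occ T P" unfolding T1_def by (rule step[OF j hP cF])
    have "{i. i < length T1 \<and> T1!i = hash} = H - {j}"
      unfolding T1_def H_def using cS assms(1) j by (auto simp: nth_list_update)
    moreover have "finite H" unfolding H_def by simp
    moreover have "j \<in> H" using j H_def by simp
    ultimately have c1: "card {i. i < length T1 \<and> T1!i = hash} = N" using c H_def by simp
    have s1: "set T1 \<subseteq> insert hash \<Sigma>" unfolding T1_def
      using s cS set_update_subset_insert by fastforce
    obtain T'' where T'': "length T'' = length T1" "set T'' \<subseteq> \<Sigma>"
        "\<forall>i<length T1. T1!i \<noteq> hash \<longrightarrow> T''!i = T1!i" "occ T'' P \<subseteq> occ T1 P"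
      using Suc.IH c1 s1 by blast
    have "\<forall>i<length T. T!i \<noteq> hash \<longrightarrow> T''!i = T!i"
    proof (intro allI impI)
      fix i assume "i < length T" "T!i \<noteq> hash"
      then show "T''!i = T!i" using T''(3) j unfolding T1_def by (cases "i = j") auto
    qed
    moreover have "occ T'' P \<subseteq> occ T P" using T''(4) occ1 by blast
    moreover have "length T'' = length T" using T''(1) unfolding T1_def by simp
    ultimately show "\<exists>T''. length T'' = length T \<and> set T'' \<subseteq> \<Sigma> \<and>
        (\<forall>i<length T. T!i \<noteq> hash \<longrightarrow> T''!i = T!i) \<and> occ T'' P \<subseteq> occ T P"
      using T''(2) by blast
  qed
qed

lemma occ_finite: "finite (occ T P)"
  by (rule finite_subset[of _ "{..length T}"]) (auto simp: occ_def)

theorem lemma11: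
  fixes \<Sigma> :: "'a set" and hash :: 'a and S P :: "'a list" and n k y :: nat
  assumes "finite \<Sigma>" and "card \<Sigma> \<ge> 4"
    and "hash \<notin> \<Sigma>"
    and "set S \<subseteq> \<Sigma>" and "length S = n"
    and "\<exists>u v. S = u @ P @ v"
    and "y > 0"
    and "\<exists>K. K \<subseteq> {..<n} \<and> card K = k \<and>
           int (card (occ S P)) - int (card (occ (mask S K hash) P)) \<ge> int y"
  shows "\<exists>S''. length S'' = n \<and> set S'' \<subseteq> \<Sigma> \<and> hamming S S'' \<le> k \<and>
           int (card (occ S P)) - int (card (occ S'' P)) \<ge> int y"
proof -
  obtain K where K: "K \<subseteq> {..<n}" "card K = k"
    "int (card (occ S P)) - int (card (occ (mask S K hash) P)) \<ge> int y"
    using assms(8) by blast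
  define S' where "S' = mask S K hash"
  have lS': "length S' = n" by (simp add: S'_def mask_def assms(5))
  have nthS': "\<And>i. i<n \<Longrightarrow> S'!i = (if i\<in>K then hash else S!i)"
    by (simp add: S'_def mask_def assms(5))
  have SS: "\<And>i. i < n \<Longrightarrow> S!i \<in> \<Sigma>" using assms(4,5) nth_mem by blast
  have setS': "set S' \<subseteq> insert hash \<Sigma>"
  proof
    fix x assume "x \<in> set S'"
    then obtain i where "i < n" "x = S'!i" using lS' by (auto simp: in_set_conv_nth)
    then show "x \<in> insert hash \<Sigma>" using nthS' SS by auto
  qed
  have setP: "set P \<subseteq> \<Sigma>" using assms(6,4) by auto
  have c3: "card \<Sigma> \<ge> 3" using assms(2) by simp
  obtain T'' where T'': "length T'' = length S'" "set T'' \<subseteq> \<Sigma>"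
      "\<forall>i<length S'. S'!i \<noteq> hash \<longrightarrow> T''!i = S'!i" "occ T'' P \<subseteq> occ S' P"
    using fill[OF assms(3) setP assms(1) c3] setS' by blast
  have "{i. i < length S \<and> S!i \<noteq> T''!i} \<subseteq> K"
  proof
    fix i assume i: "i \<in> {i. i < length S \<and> S!i \<noteq> T''!i}"
    show "i \<in> K"
    proof (rule ccontr)
      assume "i \<notin> K"
      then have "S'!i = S!i" using i nthS' assms(5) by auto
      moreover have "S!i \<noteq> hash" using SS i assms(3,5) by auto
      ultimately have "T''!i = S!i" using T''(3) i lS' assms(5) by auto
      then show False using i by auto
    qed
  qed
  moreover have "finite K" using K(1) finite_subset by blast
  ultimately have "hamming S T'' \<le> k" unfolding hamming_def using K(2) card_mono by metis
  moreover have "card (occ T'' P) \<le> card (occ S' P)"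
    using T''(4) occ_finite card_mono by metis
  ultimately show ?thesis using T'' lS' K(3) unfolding S'_def by (intro exI[of _ T'']) auto
qed

end
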